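(* Let $\mathfrak{g}$ be a $2$-dimensional non-abelian complex Lie algebra. Then every completion of the universal enveloping algebra $U(\mathfrak{g})$ with respect to a submultiplicative prenorm is a PI-algebra.
   Context: A submultiplicative prenorm on $U(\mathfrak{g})$ is a seminorm $p$ with $p(ab)\le p(a)p(b)$; the completion is the Banach algebra obtained by completing $U(\mathfrak{g})/\{a:p(a)=0\}$. An associative algebra is a PI-algebra if there is a nonzero non-commutative polynomial $p$ in finitely many variables with $p(a_1,\ldots,a_n)=0$ for all elements $a_i$ of the algebra. *)

theory Defs
  imports "HOL-Analysis.Analysis"
begin

definition complex_lie_algebra ::
  "(complex \<Rightarrow> 'g::ab_group_add \<Rightarrow> 'g) \<Rightarrow> ('g \<Rightarrow> 'g \<Rightarrow> 'g) \<Rightarrow> bool" where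
  "complex_lie_algebra sg br \<longleftrightarrow>
     vector_space sg \<and>
     (\<forall>x y z. br (x + y) z = br x z + br y z) \<and>
     (\<forall>x y z. br x (y + z) = br x y + br x z) \<and>
     (\<forall>c x y. br (sg c x) y = sg c (br x y)) \<and>
     (\<forall>c x y. br x (sg c y) = sg c (br x y)) \<and>
     (\<forall>x. br x x = 0) \<and>
     (\<forall>x y z. br x (br y z) + br y (br z x) + br z (br x y) = 0)"

text \<open>A complex Banach algebra is represented as a real Banach algebra type (norm
submultiplicative, complete) together with a complex scalar multiplication sc
extending the real one, compatible with the ring structure and with the norm.
The algebra need not satisfy norm 1 = 1 (completions of prenorms need not).\<close>

definition complex_banach_algebra_scale ::
  "(complex \<Rightarrow> 'b::{real_normed_algebra, banach} \<Rightarrow> 'b) \<Rightarrow> bool" where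
  "complex_banach_algebra_scale sc \<longleftrightarrow>
     (\<forall>r x. sc (complex_of_real r) x = r *\<^sub>R x) \<and>
     (\<forall>c d x. sc (c * d) x = sc c (sc d x)) \<and>
     (\<forall>c d x. sc (c + d) x = sc c x + sc d x) \<and>
     (\<forall>c x y. sc c (x + y) = sc c x + sc c y) \<and>
     (\<forall>c x y. sc c (x * y) = sc c x * y) \<and>
     (\<forall>c x y. sc c (x * y) = x * sc c y) \<and>
     (\<forall>c x. norm (sc c x) = cmod c * norm x)"

inductive_set gen_subalg ::
  "(complex \<Rightarrow> 'b::ring \<Rightarrow> 'b) \<Rightarrow> 'b \<Rightarrow> 'b set \<Rightarrow> 'b set"
  for sc e S where
  unit: "e \<in> gen_subalg sc e S"
| gen: "s \<in> S \<Longrightarrow> s \<in> gen_subalg sc e S"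
| add: "x \<in> gen_subalg sc e S \<Longrightarrow> y \<in> gen_subalg sc e S \<Longrightarrow> x + y \<in> gen_subalg sc e S"
| mult: "x \<in> gen_subalg sc e S \<Longrightarrow> y \<in> gen_subalg sc e S \<Longrightarrow> x * y \<in> gen_subalg sc e S"
| scale: "x \<in> gen_subalg sc e S \<Longrightarrow> sc c x \<in> gen_subalg sc e S"

text \<open>A noncommutative polynomial with complex coefficients is a finitely supported
function from words (lists of variable indices) to complex numbers; the word
[i1,...,ik] stands for the monomial X_i1 ... X_ik, the empty word for 1.\<close>

definition nc_monomial_eval :: "'b::ring \<Rightarrow> (nat \<Rightarrow> 'b) \<Rightarrow> nat list \<Rightarrow> 'b" where
  "nc_monomial_eval e a w = foldr (\<lambda>i m. a i * m) w e"

definition nc_poly_eval ::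
  "(complex \<Rightarrow> 'b::ring \<Rightarrow> 'b) \<Rightarrow> 'b \<Rightarrow> (nat list \<Rightarrow> complex) \<Rightarrow> (nat \<Rightarrow> 'b) \<Rightarrow> 'b" where
  "nc_poly_eval sc e f a = (\<Sum>w\<in>{w. f w \<noteq> 0}. sc (f w) (nc_monomial_eval e a w))"

definition is_PI_algebra :: "(complex \<Rightarrow> 'b::ring \<Rightarrow> 'b) \<Rightarrow> 'b \<Rightarrow> bool" where
  "is_PI_algebra sc e \<longleftrightarrow>
     (\<exists>f n. finite {w. f w \<noteq> 0} \<and> (\<exists>w. f w \<noteq> 0) \<and>
            (\<forall>w. f w \<noteq> 0 \<longrightarrow> set w \<subseteq> {..<n}) \<and>
            (\<forall>a. nc_poly_eval sc e f a = 0))"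

end

theory Submission
  imports Defs
begin


lemma lie_struct:
  fixes sg :: "complex \<Rightarrow> 'g::ab_group_add \<Rightarrow> 'g" and br :: "'g \<Rightarrow> 'g \<Rightarrow> 'g"
  assumes lie: "complex_lie_algebra sg br"
    and dim2: "vector_space.dim sg UNIV = 2"
    and nonab: "\<exists>x y. br x y \<noteq> 0"
  shows "\<exists>x w. br x w = w \<and> (\<forall>z z'. \<exists>c. br z z' = sg c w)"
proof -
  interpret vector_space sg using lie unfolding complex_lie_algebra_def by blast
  have addl: "\<And>x y z. br (x + y) z = br x z + br y z"
   and addr: "\<And>x y z. br x (y + z) = br x y + br x z"
   and scl: "\<And>c x y. br (sg c x) y = sg c (br x y)"
   and scr: "\<And>c x y. br x (sg c y) = sg c (br x y)"
   and alt: "\<And>x. br x x = 0" using lie unfolding complex_lie_algebra_def by blast+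
  have anti: "br y x = - br x y" for x y
  proof -
    have "0 = br (x + y) (x + y)" by (simp add: alt)
    also have "\<dots> = br x x + br y x + (br x y + br y y)" by (simp only: addl addr)
    also have "\<dots> = br y x + br x y" by (simp add: alt)
    finally have "br x y + br y x = 0" by (simp add: add.commute)
    then show ?thesis by (metis minus_unique)
  qed
  obtain B where B0: "B \<subseteq> UNIV" "independent B" "UNIV \<subseteq> span B" "card B = dim UNIV"
    by (rule basis_exists)
  have B: "independent B" "UNIV \<subseteq> span B" "card B = 2" using B0 dim2 by simp_all
  have "\<exists>u v. B = {u, v} \<and> u \<noteq> v" using B(3) card_2_iff by metis
  then obtain u v where uv: "B = {u, v}" "u \<noteq> v" by blast
  have sp: "\<exists>a b. z = sg a u + sg b v" for z
  proof -
    have "z \<in> span {u, v}" using B uv by auto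
    then obtain a where "z - sg a u \<in> span {v}" using span_breakdown_eq by blast
    then obtain b where "z - sg a u = sg b v" using span_singleton by auto
    then have "z = sg a u + sg b v" by (simp add: algebra_simps)
    then show ?thesis by blast
  qed
  define w where "w = br u v"
  have bl: "br (sg a u + sg b v) (sg c u + sg d v) = sg (a*d - b*c) w" for a b c d
  proof -
    have "br (sg a u + sg b v) (sg c u + sg d v) = sg c (sg a (br u u) + sg b (br v u)) + sg d (sg a (br u v) + sg b (br v v))"
      by (simp only: addl addr scl scr)
    also have "\<dots> = sg (a*d) w - sg (b*c) w" unfolding anti[of v u] alt w_def by (simp add: scale_right_distrib mult.commute)
    finally show ?thesis by (simp add: scale_left_diff_distrib)
  qed
  have A: "\<forall>z z'. \<exists>c. br z z' = sg c w"
  proof (intro allI)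
    fix z z'
    obtain a b where "z = sg a u + sg b v" using sp by blast
    moreover obtain c d where "z' = sg c u + sg d v" using sp by blast
    ultimately show "\<exists>c. br z z' = sg c w" using bl by blast
  qed
  have w0: "w \<noteq> 0"
  proof
    assume "w = 0"
    then have "br z z' = 0" for z z' using A by auto
    then show False using nonab by blast
  qed
  obtain \<alpha> \<beta> where ab: "w = sg \<alpha> u + sg \<beta> v" using sp by blast
  have bw: "br (sg p u + sg q v) w = sg (p*\<beta> - q*\<alpha>) w" for p q
    using bl[of p q \<alpha> \<beta>] ab by simp
  show ?thesis
  proof (cases "\<beta> = 0")
    case False
    then have "br (sg (1/\<beta>) u + sg 0 v) w = w" using bw[of "1/\<beta>" 0] by simp
    then show ?thesis using A by blast
  next
    case True
    then have "\<alpha> \<noteq> 0" using ab w0 by auto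
    then have "br (sg 0 u + sg (-1/\<alpha>) v) w = w" using bw[of 0 "-1/\<alpha>"] True by simp
    then show ?thesis using A by blast
  qed
qed


locale bsetup =
  fixes sc :: "complex \<Rightarrow> 'b::{real_normed_algebra, banach} \<Rightarrow> 'b"
    and e :: 'b and S :: "'b set" and X Y :: 'b
  assumes cba: "complex_banach_algebra_scale sc"
    and unit: "\<forall>x. e * x = x \<and> x * e = x"
    and XY: "X * Y - Y * X = Y"
    and YS: "Y \<in> S"
    and SS: "\<forall>s\<in>S. \<forall>t\<in>S. \<exists>c. s * t - t * s = sc c Y"
begin

abbreviation "A \<equiv> gen_subalg sc e S"

lemma sc_real: "sc (complex_of_real r) x = r *\<^sub>R x" using cba unfolding complex_banach_algebra_scale_def by blast
lemma sc_add: "sc c (x + y) = sc c x + sc c y" using cba unfolding complex_banach_algebra_scale_def by blast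
lemma sc_addl: "sc (c + d) x = sc c x + sc d x" using cba unfolding complex_banach_algebra_scale_def by blast
lemma sc_ml: "sc c (x * y) = sc c x * y" using cba unfolding complex_banach_algebra_scale_def by blast
lemma sc_mr: "sc c (x * y) = x * sc c y" using cba unfolding complex_banach_algebra_scale_def by blast
lemma sc_0l: "sc 0 x = 0" using sc_real[of 0 x] by simp
lemma sc_1l: "sc 1 x = x" using sc_real[of 1 x] by simp
lemma sc_neg: "sc (- c) x = - sc c x"
proof -
  have "sc c x + sc (- c) x = 0" using sc_addl[of c "-c" x] sc_0l by simp
  then show ?thesis by (metis minus_unique)
qed
lemma sc_0r: "sc c 0 = 0" using sc_add[of c 0 0] by simp
lemma sc_diff: "sc c (x - y) = sc c x - sc c y"
proof -
  have "sc c (x - y) + sc c y = sc c x" using sc_add[of c "x - y" y] by simp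
  then show ?thesis by (simp add: eq_diff_eq)
qed
lemma ue: "e * x = x" "x * e = x" using unit by auto

lemma zeroA: "0 \<in> A"
proof -
  have "sc 0 e \<in> A" by (rule gen_subalg.scale[OF gen_subalg.unit])
  then show ?thesis by (simp add: sc_0l)
qed

lemma move: "a \<in> A \<Longrightarrow> \<exists>a'\<in>A. a * Y = Y * a'"
proof (induction a rule: gen_subalg.induct)
  case unit
  then show ?case using ue gen_subalg.unit by metis
next
  case (gen s)
  obtain c where c: "s * Y - Y * s = sc c Y" using SS gen YS by blast
  have "s * Y = Y * s + sc c Y" by (metis c add.commute diff_add_cancel)
  also have "\<dots> = Y * (s + sc c e)" using sc_mr[of c Y e] ue by (simp add: distrib_left)
  finally show ?case using gen_subalg.add[OF gen_subalg.gen[OF gen] gen_subalg.scale[OF gen_subalg.unit]] by blast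
next
  case (add x y)
  then obtain x' y' where "x'\<in>A" "y'\<in>A" "x * Y = Y * x'" "y * Y = Y * y'" by blast
  then show ?case using gen_subalg.add[of x' sc e S y'] by (metis distrib_left distrib_right)
next
  case (mult x y)
  then obtain x' y' where "x'\<in>A" "y'\<in>A" "x * Y = Y * x'" "y * Y = Y * y'" by blast
  then have "x * y * Y = Y * (x' * y')" by (metis mult.assoc)
  then show ?case using gen_subalg.mult[OF \<open>x'\<in>A\<close> \<open>y'\<in>A\<close>] by blast
next
  case (scale x c)
  then obtain x' where "x'\<in>A" "x * Y = Y * x'" by blast
  then have "sc c x * Y = Y * sc c x'" by (metis sc_ml sc_mr)
  then show ?case using gen_subalg.scale[OF \<open>x'\<in>A\<close>] by blast
qed

lemma comm_gen:
  assumes t: "\<forall>s\<in>S. \<exists>d\<in>A. t * s - s * t = Y * d"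
  shows "b \<in> A \<Longrightarrow> \<exists>d\<in>A. t * b - b * t = Y * d"
proof (induction b rule: gen_subalg.induct)
  case unit
  then show ?case using ue zeroA by (metis diff_self mult_zero_right)
next
  case (gen s)
  then show ?case using t by blast
next
  case (add x y)
  then obtain d1 d2 where "d1\<in>A" "d2\<in>A" "t * x - x * t = Y * d1" "t * y - y * t = Y * d2" by blast
  then have "t * (x + y) - (x + y) * t = Y * (d1 + d2)" by (simp add: algebra_simps)
  then show ?case using gen_subalg.add[OF \<open>d1\<in>A\<close> \<open>d2\<in>A\<close>] by blast
next
  case (mult x y)
  then obtain d1 d2 where d: "d1\<in>A" "d2\<in>A" "t * x - x * t = Y * d1" "t * y - y * t = Y * d2" by blast
  obtain x' where x': "x'\<in>A" "x * Y = Y * x'" using move mult by blast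
  have "t * (x * y) - (x * y) * t = (t * x - x * t) * y + x * (t * y - y * t)" by (simp add: algebra_simps)
  also have "\<dots> = Y * (d1 * y + x' * d2)" by (metis d(3) d(4) x'(2) distrib_left mult.assoc)
  finally show ?case using gen_subalg.add[OF gen_subalg.mult[OF \<open>d1\<in>A\<close> \<open>y\<in>A\<close>] gen_subalg.mult[OF x'(1) \<open>d2\<in>A\<close>]] by blast
next
  case (scale x c)
  then obtain d where d: "d\<in>A" "t * x - x * t = Y * d" by blast
  have "t * sc c x - sc c x * t = sc c (t * x - x * t)" by (metis sc_diff sc_ml sc_mr)
  also have "\<dots> = Y * sc c d" using d sc_mr by simp
  finally show ?case using gen_subalg.scale[OF d(1)] by blast
qed

lemma comm_all:
  assumes "a \<in> A" "b \<in> A" shows "\<exists>d\<in>A. a * b - b * a = Y * d"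
proof -
  have g: "\<exists>d\<in>A. s * b - b * s = Y * d" if "s \<in> S" "b \<in> A" for s b
  proof (rule comm_gen[OF _ that(2)])
    show "\<forall>s'\<in>S. \<exists>d\<in>A. s * s' - s' * s = Y * d"
    proof
      fix s' assume "s' \<in> S"
      then obtain c where "s * s' - s' * s = sc c Y" using SS \<open>s\<in>S\<close> by blast
      then have "s * s' - s' * s = Y * sc c e" using sc_mr[of c Y e] ue by simp
      then show "\<exists>d\<in>A. s * s' - s' * s = Y * d" using gen_subalg.scale[OF gen_subalg.unit] by blast
    qed
  qed
  show ?thesis
  proof (rule comm_gen[OF _ assms(2)])
    show "\<forall>s\<in>S. \<exists>d\<in>A. a * s - s * a = Y * d"
    proof
      fix s assume "s \<in> S"
      then obtain d where "d\<in>A" "s * a - a * s = Y * d" using g assms by blast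
      then have "a * s - s * a = Y * (- d)" by (metis minus_diff_eq mult_minus_right)
      moreover have "sc (-1) d \<in> A" by (rule gen_subalg.scale[OF \<open>d\<in>A\<close>])
      then have "- d \<in> A" using sc_neg[of 1 d] sc_1l by simp
      ultimately show "\<exists>d\<in>A. a * s - s * a = Y * d" by blast
    qed
  qed
qed

fun yp :: "nat \<Rightarrow> 'b" where
  "yp 0 = Y" | "yp (Suc n) = yp n * Y"

lemma yp_comm: "X * yp n - yp n * X = real (Suc n) *\<^sub>R yp n"
proof (induction n)
  case 0
  then show ?case using XY by simp
next
  case (Suc n)
  have "X * yp (Suc n) - yp (Suc n) * X = (X * yp n - yp n * X) * Y + yp n * (X * Y - Y * X)"
    by (simp add: algebra_simps)
  also have "\<dots> = real (Suc (Suc n)) *\<^sub>R yp (Suc n)" using Suc XY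
    by (simp add: algebra_simps scaleR_2)
  finally show ?case .
qed

lemma yp_zero: assumes "real (Suc n) > 2 * norm X" shows "yp n = 0"
proof (rule ccontr)
  assume nz: "yp n \<noteq> 0"
  have "real (Suc n) * norm (yp n) = norm (X * yp n - yp n * X)" using yp_comm[of n] by simp
  also have "\<dots> \<le> norm (X * yp n) + norm (yp n * X)" by (rule norm_triangle_ineq4)
  also have "\<dots> \<le> norm X * norm (yp n) + norm (yp n) * norm X"
    by (intro add_mono norm_mult_ineq)
  finally have "real (Suc n) * norm (yp n) \<le> (2 * norm X) * norm (yp n)" by simp
  then have "real (Suc n) \<le> 2 * norm X" using nz by simp
  then show False using assms by simp
qed

lemma Y_yp: "Y * yp n = yp n * Y"
  by (induction n) (simp_all add: mult.assoc[symmetric])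

lemma move_pow: "a \<in> A \<Longrightarrow> \<exists>a'\<in>A. a * yp n = yp n * a'"
proof (induction n arbitrary: a)
  case 0
  then show ?case using move by simp
next
  case (Suc n)
  obtain a1 where a1: "a1\<in>A" "a * yp n = yp n * a1" using Suc by blast
  obtain a2 where a2: "a2\<in>A" "a1 * Y = Y * a2" using move a1 by blast
  have "a * yp (Suc n) = yp n * (a1 * Y)" using a1 by (simp add: mult.assoc[symmetric])
  also have "\<dots> = yp (Suc n) * a2" using a2 by (simp add: mult.assoc)
  finally show ?case using a2 by blast
qed

end

fun phi :: "'b::ring \<Rightarrow> nat \<Rightarrow> (nat \<Rightarrow> 'b) \<Rightarrow> 'b" where
  "phi e 0 a = e"
| "phi e (Suc k) a = (a (2*k) * a (2*k+1) - a (2*k+1) * a (2*k)) * phi e k a"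

context bsetup begin

lemma phi_prod: "\<forall>i. a i \<in> A \<Longrightarrow> \<exists>d\<in>A. phi e (Suc k) a = yp k * d"
proof (induction k)
  case 0
  then show ?case using comm_all ue by simp
next
  case (Suc k)
  then obtain d where d: "d\<in>A" "phi e (Suc k) a = yp k * d" by blast
  obtain d' where d': "d'\<in>A" "a (2*Suc k) * a (2*Suc k+1) - a (2*Suc k+1) * a (2*Suc k) = Y * d'"
    using comm_all Suc.prems by blast
  obtain d'' where d'': "d''\<in>A" "d' * yp k = yp k * d''" using move_pow d' by blast
  have "phi e (Suc (Suc k)) a = Y * (d' * yp k) * d" using d d' by (simp add: mult.assoc)
  also have "\<dots> = Y * (yp k * d'') * d" using d'' by simp
  also have "\<dots> = (Y * yp k) * (d'' * d)" by (simp add: mult.assoc)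
  also have "\<dots> = yp (Suc k) * (d'' * d)" by (simp add: Y_yp)
  finally show ?case using gen_subalg.mult[OF d''(1) d(1)] by blast
qed

end


fun fk :: "nat \<Rightarrow> nat list \<Rightarrow> complex" where
  "fk 0 w = (if w = [] then 1 else 0)"
| "fk (Suc k) w = (case w of i # j # r \<Rightarrow>
      (if i = 2*k \<and> j = 2*k+1 then fk k r else 0) - (if i = 2*k+1 \<and> j = 2*k then fk k r else 0)
    | _ \<Rightarrow> 0)"

fun wd :: "nat \<Rightarrow> nat list" where
  "wd 0 = []" | "wd (Suc k) = 2*k # (2*k+1) # wd k"

lemma fk_wd: "fk k (wd k) = 1"
  by (induction k) auto

lemma fk_supp: "{w. fk (Suc k) w \<noteq> 0} \<subseteq>
   (\<lambda>w. 2*k # (2*k+1) # w) ` {w. fk k w \<noteq> 0} \<union> (\<lambda>w. (2*k+1) # 2*k # w) ` {w. fk k w \<noteq> 0}"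
proof
  fix w assume "w \<in> {w. fk (Suc k) w \<noteq> 0}"
  then have nz: "fk (Suc k) w \<noteq> 0" by simp
  then obtain i j r where w: "w = i # j # r" by (auto split: list.splits)
  show "w \<in> (\<lambda>w. 2*k # (2*k+1) # w) ` {w. fk k w \<noteq> 0} \<union> (\<lambda>w. (2*k+1) # 2*k # w) ` {w. fk k w \<noteq> 0}"
    using nz unfolding w by (auto split: if_splits)
qed

lemma fk_fin: "finite {w. fk k w \<noteq> 0}"
proof (induction k)
  case 0
  have "{w. fk 0 w \<noteq> 0} = {[]}" by auto
  then show ?case by simp
next
  case (Suc k)
  show ?case by (rule finite_subset[OF fk_supp]) (simp add: Suc)
qed

lemma fk_set: "fk k w \<noteq> 0 \<Longrightarrow> set w \<subseteq> {..<2*k}"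
proof (induction k arbitrary: w)
  case 0
  then show ?case by (auto split: if_splits)
next
  case (Suc k)
  then have "w \<in> (\<lambda>w. 2*k # (2*k+1) # w) ` {w. fk k w \<noteq> 0} \<union> (\<lambda>w. (2*k+1) # 2*k # w) ` {w. fk k w \<noteq> 0}"
    using fk_supp by blast
  then show ?case using Suc.IH by fastforce
qed

lemma phi_local: "(\<forall>i<2*k. a i = b i) \<Longrightarrow> phi e k a = phi e k b"
  by (induction k) auto

lemma upd_cont: "continuous_on UNIV (\<lambda>v. (a(m:=v)) i)"
  by (cases "i = m") (simp_all add: continuous_on_id continuous_on_const)

lemma phi_cont:
  fixes a :: "nat \<Rightarrow> 'b::real_normed_algebra"
  shows "continuous_on UNIV (\<lambda>v. phi e k (a(m:=v)))"
proof (induction k)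
  case 0
  then show ?case by (simp add: continuous_on_const)
next
  case (Suc k)
  show ?case unfolding phi.simps
    by (intro continuous_on_mult continuous_on_diff upd_cont Suc)
qed

context bsetup begin

lemma eval_super:
  assumes "finite U" "{w. f w \<noteq> 0} \<subseteq> U"
  shows "nc_poly_eval sc e f a = (\<Sum>w\<in>U. sc (f w) (nc_monomial_eval e a w))"
  unfolding nc_poly_eval_def
  by (rule sum.mono_neutral_left[OF assms(1) assms(2)]) (auto simp: sc_0l)

lemma eval_fk: "nc_poly_eval sc e (fk k) a = phi e k a"
proof (induction k)
  case 0
  have "{w. fk 0 w \<noteq> 0} = {[]}" by auto
  then show ?case by (simp add: nc_poly_eval_def nc_monomial_eval_def sc_1l)
next
  case (Suc k)
  define T where "T = {w. fk k w \<noteq> 0}"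
  define p1 where "p1 = (\<lambda>w. 2*k # (2*k+1) # w)"
  define p2 where "p2 = (\<lambda>w::nat list. (2*k+1) # 2*k # w)"
  define m where "m = nc_monomial_eval e a"
  define P where "P = (\<Sum>t\<in>T. sc (fk k t) (m t))"
  have P: "P = phi e k a" using Suc unfolding P_def T_def m_def nc_poly_eval_def by simp
  have fT: "finite T" unfolding T_def by (rule fk_fin)
  have m_cons: "m (i # j # t) = a i * (a j * m t)" for i j t
    unfolding m_def nc_monomial_eval_def by simp
  have "nc_poly_eval sc e (fk (Suc k)) a = (\<Sum>w\<in>p1 ` T \<union> p2 ` T. sc (fk (Suc k) w) (m w))"
    unfolding m_def by (rule eval_super) (use fT fk_supp in \<open>auto simp: T_def p1_def p2_def\<close>)
  also have "\<dots> = (\<Sum>w\<in>p1 ` T. sc (fk (Suc k) w) (m w)) + (\<Sum>w\<in>p2 ` T. sc (fk (Suc k) w) (m w))"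
    by (rule sum.union_disjoint) (auto simp: fT p1_def p2_def)
  also have "(\<Sum>w\<in>p1 ` T. sc (fk (Suc k) w) (m w)) = (\<Sum>t\<in>T. sc (fk (Suc k) (p1 t)) (m (p1 t)))"
    by (rule sum.reindex_cong[OF _ refl refl]) (auto simp: inj_on_def p1_def)
  also have "\<dots> = (\<Sum>t\<in>T. a (2*k) * (a (2*k+1) * sc (fk k t) (m t)))"
    unfolding p1_def m_cons by (simp add: sc_mr)
  also have "\<dots> = a (2*k) * (a (2*k+1) * P)"
    unfolding P_def by (simp add: sum_distrib_left)
  also have "(\<Sum>w\<in>p2 ` T. sc (fk (Suc k) w) (m w)) = (\<Sum>t\<in>T. sc (fk (Suc k) (p2 t)) (m (p2 t)))"
    by (rule sum.reindex_cong[OF _ refl refl]) (auto simp: inj_on_def p2_def)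
  also have "\<dots> = (\<Sum>t\<in>T. - (a (2*k+1) * (a (2*k) * sc (fk k t) (m t))))"
    unfolding p2_def m_cons by (simp add: sc_mr sc_neg)
  also have "\<dots> = - (a (2*k+1) * (a (2*k) * P))"
    unfolding P_def by (simp add: sum_distrib_left sum_negf)
  finally show ?case using P by (simp add: algebra_simps)
qed

lemma phi_vanish_dense:
  assumes dense: "closure A = UNIV"
    and base: "\<forall>a. (\<forall>i. a i \<in> A) \<longrightarrow> phi e k a = 0"
  shows "\<forall>a. (\<forall>i. m \<le> i \<longrightarrow> a i \<in> A) \<longrightarrow> phi e k a = 0"
proof (induction m)
  case 0
  then show ?case using base by simp
next
  case (Suc m)
  show ?case
  proof (intro allI impI)
    fix a assume a: "\<forall>i. Suc m \<le> i \<longrightarrow> a i \<in> A"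
    have "A \<subseteq> {v. phi e k (a(m:=v)) = 0}"
    proof
      fix v assume "v \<in> A"
      then have "\<forall>i. m \<le> i \<longrightarrow> (a(m:=v)) i \<in> A" using a by (auto simp: Suc_le_eq)
      then show "v \<in> {v. phi e k (a(m:=v)) = 0}" using Suc.IH by blast
    qed
    moreover have "closed {v. phi e k (a(m:=v)) = 0}"
      by (rule closed_Collect_eq[OF phi_cont continuous_on_const])
    ultimately have "closure A \<subseteq> {v. phi e k (a(m:=v)) = 0}" by (rule closure_minimal)
    then have "phi e k (a(m:= a m)) = 0" using dense by blast
    then show "phi e k a = 0" by simp
  qed
qed

lemma PI:
  assumes dense: "closure A = UNIV"
  shows "is_PI_algebra sc e"
proof -
  define k where "k = nat \<lceil>2 * norm X\<rceil>"
  have kk: "real (Suc k) > 2 * norm X" unfolding k_def by linarith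
  have base: "\<forall>a. (\<forall>i. a i \<in> A) \<longrightarrow> phi e (Suc k) a = 0"
  proof (intro allI impI)
    fix a :: "nat \<Rightarrow> 'b" assume "\<forall>i. a i \<in> A"
    then obtain d where "phi e (Suc k) a = yp k * d" using phi_prod by blast
    then show "phi e (Suc k) a = 0" using yp_zero[OF kk] by simp
  qed
  have all: "phi e (Suc k) a = 0" for a
  proof -
    define a' where "a' = (\<lambda>i. if i < 2 * Suc k then a i else e)"
    have "\<forall>i. 2 * Suc k \<le> i \<longrightarrow> a' i \<in> A" unfolding a'_def by (auto intro: gen_subalg.unit)
    then have "phi e (Suc k) a' = 0" using phi_vanish_dense[OF dense base] by blast
    moreover have "phi e (Suc k) a = phi e (Suc k) a'" by (rule phi_local) (simp add: a'_def)
    ultimately show ?thesis by simp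
  qed
  show ?thesis unfolding is_PI_algebra_def
  proof (intro exI conjI allI impI)
    show "finite {w. fk (Suc k) w \<noteq> 0}" by (rule fk_fin)
    show "fk (Suc k) (wd (Suc k)) \<noteq> 0" using fk_wd by simp
    show "set w \<subseteq> {..<2 * Suc k}" if "fk (Suc k) w \<noteq> 0" for w using fk_set that by blast
    show "nc_poly_eval sc e (fk (Suc k)) a = 0" for a using eval_fk all by simp
  qed
qed

end

theorem proposition3:
  fixes sg :: "complex \<Rightarrow> 'g::ab_group_add \<Rightarrow> 'g"
    and br :: "'g \<Rightarrow> 'g \<Rightarrow> 'g"
    and sc :: "complex \<Rightarrow> 'b::{real_normed_algebra, banach} \<Rightarrow> 'b"
    and e :: 'b
    and \<psi> :: "'g \<Rightarrow> 'b"
  assumes lie: "complex_lie_algebra sg br"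
    and dim2: "vector_space.dim sg UNIV = 2"
    and nonab: "\<exists>x y. br x y \<noteq> 0"
    and cba: "complex_banach_algebra_scale sc"
    and unit: "\<forall>x. e * x = x \<and> x * e = x"
    and add: "\<forall>x y. \<psi> (x + y) = \<psi> x + \<psi> y"
    and lin: "\<forall>c x. \<psi> (sg c x) = sc c (\<psi> x)"
    and bracket: "\<forall>x y. \<psi> (br x y) = \<psi> x * \<psi> y - \<psi> y * \<psi> x"
    and dense: "closure (gen_subalg sc e (range \<psi>)) = UNIV"
  shows "is_PI_algebra sc e"
proof -
  obtain x w where xw: "br x w = w" and A: "\<forall>z z'. \<exists>c. br z z' = sg c w"
    using lie_struct[OF lie dim2 nonab] by blast
  interpret bsetup sc e "range \<psi>" "\<psi> x" "\<psi> w"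
  proof
    show "complex_banach_algebra_scale sc" by (rule cba)
    show "\<forall>x. e * x = x \<and> x * e = x" by (rule unit)
    show "\<psi> x * \<psi> w - \<psi> w * \<psi> x = \<psi> w" using bracket xw by metis
    show "\<psi> w \<in> range \<psi>" by simp
    show "\<forall>s\<in>range \<psi>. \<forall>t\<in>range \<psi>. \<exists>c. s * t - t * s = sc c (\<psi> w)"
    proof (intro ballI)
      fix s t assume "s \<in> range \<psi>" "t \<in> range \<psi>"
      then obtain z z' where "s = \<psi> z" "t = \<psi> z'" by blast
      moreover obtain c where "br z z' = sg c w" using A by blast
      ultimately have "s * t - t * s = sc c (\<psi> w)" using bracket lin by metis
      then show "\<exists>c. s * t - t * s = sc c (\<psi> w)" by blast
    qed
  qed
  show ?thesis by (rule PI[OF dense])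
qed

end
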